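(* Let $\xi(k)=(\xi_1(k),\dots,\xi_d(k))$, $k\geq 0$, be a stationary $d$-dimensional stochastic process on a probability space $(\Omega,\mathcal{F},P)$ such that $E|\xi(0)|<\infty$. Let $Q=(Q_1,\dots,Q_d)$ be the (in general random) almost sure limit $Q=\lim_{n\to\infty}n^{-1}\sum_{k=0}^n\xi(k)$, which exists by the Birkhoff ergodic theorem. For $\nu\geq1$ and $1\leq i_1,\dots,i_\nu\leq d$ define \[ \Sigma^{i_1,\dots,i_\nu}(n)=\sum_{0\leq k_1<\dots<k_\nu<n}\xi_{i_1}(k_1)\xi_{i_2}(k_2)\cdots\xi_{i_\nu}(k_\nu). \] Then with probability one, \[ \lim_{n\to\infty}n^{-\nu}\Sigma^{i_1,\dots,i_\nu}(n)=\frac 1{\nu !}\prod_{j=1}^\nu Q_{i_j} \] for all $1\leq i_1,\dots,i_\nu\leq d$.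
   Context: $|\cdot|$ denotes the Euclidean norm on $\mathbb{R}^d$. *)

theory Defs
  imports "HOL-Probability.Probability"
begin

text \<open>Iterated sum over 0 \<le> k_0 < k_1 < ... < k_(nu-1) < n of
  xi_(i_0)(k_0) * ... * xi_(i_(nu-1))(k_(nu-1)); index tuples are encoded as
  functions nat \<Rightarrow> nat that vanish from position nu on.\<close>

definition incr_tuples :: "nat \<Rightarrow> nat \<Rightarrow> (nat \<Rightarrow> nat) set" where
  "incr_tuples \<nu> n = {ks. (\<forall>j<\<nu>. ks j < n) \<and> (\<forall>j. Suc j < \<nu> \<longrightarrow> ks j < ks (Suc j))
                          \<and> (\<forall>j\<ge>\<nu>. ks j = 0)}"

definition iter_sum :: "(nat \<Rightarrow> 'a \<Rightarrow> real ^ 'd) \<Rightarrow> (nat \<Rightarrow> 'd) \<Rightarrow> nat \<Rightarrow> nat \<Rightarrow> 'a \<Rightarrow> real" where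
  "iter_sum \<xi> is \<nu> n \<omega> = (\<Sum>ks\<in>incr_tuples \<nu> n. \<Prod>j<\<nu>. \<xi> (ks j) \<omega> $ is j)"

end

theory Submission
  imports Defs
begin

lemma lemG:
  fixes h g :: "nat \<Rightarrow> real"
  assumes hg: "\<And>\<epsilon>. \<epsilon> > 0 \<Longrightarrow> \<exists>N. \<forall>m\<ge>N. \<bar>h m\<bar> \<le> \<epsilon> * g m"
    and gnn: "\<And>m. g m \<ge> 0"
    and gb: "\<And>n. (\<Sum>m<n. g m) \<le> C * real n ^ s"
    and s: "s \<ge> 1"
  shows "(\<lambda>n. (\<Sum>m<n. h m) / real n ^ s) \<longlonglongrightarrow> 0"
proof (rule LIMSEQ_I)
  fix r :: real assume r: "r > 0"
  define e where "e = r / (2 * (\<bar>C\<bar> + 1))"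
  have e: "e > 0" using r by (simp add: e_def)
  obtain N where N: "\<forall>m\<ge>N. \<bar>h m\<bar> \<le> e * g m" using hg[OF e] by blast
  define K where "K = (\<Sum>m<N. \<bar>h m\<bar>)"
  have K0: "K \<ge> 0" unfolding K_def by (simp add: sum_nonneg)
  have "(\<lambda>n. K / real n ^ s) \<longlonglongrightarrow> 0"
  proof -
    have "filterlim (\<lambda>n. real n ^ s) at_top sequentially"
      using s by (intro filterlim_pow_at_top filterlim_real_sequentially) auto
    then show ?thesis by (intro tendsto_divide_0[OF tendsto_const]) (rule filterlim_at_top_imp_at_infinity)
  qed
  then obtain M where M: "\<forall>n\<ge>M. norm (K / real n ^ s - 0) < r / 2"
    using r by (metis LIMSEQ_D half_gt_zero)
  show "\<exists>no. \<forall>n\<ge>no. norm ((\<Sum>m<n. h m) / real n ^ s - 0) < r"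
  proof (intro exI allI impI)
    fix n assume n: "n \<ge> max (max M N) 1"
    have np: "real n ^ s > 0" using n by simp
    have "\<bar>\<Sum>m<n. h m\<bar> \<le> (\<Sum>m<n. \<bar>h m\<bar>)" by (rule sum_abs)
    also have "\<dots> = K + (\<Sum>m\<in>{N..<n}. \<bar>h m\<bar>)"
    proof -
      have "{..<n} = {..<N} \<union> {N..<n}" using n by auto
      then show ?thesis unfolding K_def by (simp add: sum.union_disjoint ivl_disj_int)
    qed
    also have "(\<Sum>m\<in>{N..<n}. \<bar>h m\<bar>) \<le> (\<Sum>m\<in>{N..<n}. e * g m)"
      using N by (intro sum_mono) auto
    also have "\<dots> \<le> (\<Sum>m<n. e * g m)"
      using e gnn by (intro sum_mono2) auto
    also have "\<dots> = e * (\<Sum>m<n. g m)" by (simp add: sum_distrib_left)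
    also have "\<dots> \<le> e * (C * real n ^ s)" using gb e by (simp add: mult_left_mono)
    finally have "\<bar>\<Sum>m<n. h m\<bar> \<le> K + e * C * real n ^ s" by simp
    then have "\<bar>\<Sum>m<n. h m\<bar> / real n ^ s \<le> (K + e * C * real n ^ s) / real n ^ s"
      using np by (intro divide_right_mono) auto
    also have "\<dots> = K / real n ^ s + e * C" using np by (simp add: add_divide_distrib)
    finally have A: "\<bar>\<Sum>m<n. h m\<bar> / real n ^ s \<le> K / real n ^ s + e * C" .
    moreover have "K / real n ^ s < r / 2" using M n K0 by auto
    moreover have "e * C < r / 2"
    proof -
      have "e * C \<le> e * \<bar>C\<bar>" using e by (simp add: mult_left_mono)
      also have "\<dots> < e * (2 * (\<bar>C\<bar> + 1)) / 2" using e by (simp add: field_simps)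
      also have "\<dots> = r / 2" using e_def by (simp add: field_simps)
      finally show ?thesis .
    qed
    ultimately have "\<bar>\<Sum>m<n. h m\<bar> / real n ^ s < r" using A by linarith
    then show "norm ((\<Sum>m<n. h m) / real n ^ s - 0) < r" using np by (simp add: abs_divide)
  qed
qed


lemma pow_step_bounds:
  fixes m :: real assumes m: "m \<ge> 0"
  shows "real (Suc r) * m ^ r \<le> (m + 1) ^ Suc r - m ^ Suc r"
    and "(m + 1) ^ Suc r - m ^ Suc r \<le> real (Suc r) * (m + 1) ^ r"
proof -
  have eq: "(m + 1) ^ Suc r - m ^ Suc r = (\<Sum>i<Suc r. m ^ (Suc r - Suc i) * (m + 1) ^ i)"
    using power_diff_sumr2[of "m + 1" "Suc r" m] by simp
  have lo: "m ^ r \<le> m ^ (Suc r - Suc i) * (m + 1) ^ i" if "i < Suc r" for i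
  proof -
    have "m ^ r = m ^ (Suc r - Suc i) * m ^ i" using that by (simp flip: power_add)
    also have "\<dots> \<le> m ^ (Suc r - Suc i) * (m + 1) ^ i"
      using m by (intro mult_left_mono power_mono) auto
    finally show ?thesis .
  qed
  have hi: "m ^ (Suc r - Suc i) * (m + 1) ^ i \<le> (m + 1) ^ r" if "i < Suc r" for i
  proof -
    have "m ^ (Suc r - Suc i) * (m + 1) ^ i \<le> (m + 1) ^ (Suc r - Suc i) * (m + 1) ^ i"
      using m by (intro mult_right_mono power_mono) auto
    also have "\<dots> = (m + 1) ^ r" using that by (simp flip: power_add)
    finally show ?thesis .
  qed
  show "real (Suc r) * m ^ r \<le> (m + 1) ^ Suc r - m ^ Suc r"
  proof -
    have "(\<Sum>i<Suc r. m ^ r) \<le> (\<Sum>i<Suc r. m ^ (Suc r - Suc i) * (m + 1) ^ i)"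
      by (rule sum_mono) (rule lo, simp)
    then show ?thesis unfolding eq by simp
  qed
  show "(m + 1) ^ Suc r - m ^ Suc r \<le> real (Suc r) * (m + 1) ^ r"
  proof -
    have "(\<Sum>i<Suc r. m ^ (Suc r - Suc i) * (m + 1) ^ i) \<le> (\<Sum>i<Suc r. (m + 1) ^ r)"
      by (rule sum_mono) (rule hi, simp)
    then show ?thesis unfolding eq by simp
  qed
qed

lemma pow_sum_limit:
  "(\<lambda>n. (\<Sum>m<n. real m ^ r) / real n ^ Suc r) \<longlonglongrightarrow> 1 / real (Suc r)"
proof -
  define P where "P n = (\<Sum>m<n. real m ^ r)" for n
  have tel: "(\<Sum>m<n. real (Suc m) ^ Suc r - real m ^ Suc r) = real n ^ Suc r" for n
    using sum_lessThan_telescope[of "\<lambda>m. real m ^ Suc r" n] by simp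
  have up: "real (Suc r) * P n \<le> real n ^ Suc r" for n
  proof -
    have "real (Suc r) * P n = (\<Sum>m<n. real (Suc r) * real m ^ r)"
      unfolding P_def by (simp add: sum_distrib_left)
    also have "\<dots> \<le> (\<Sum>m<n. real (Suc m) ^ Suc r - real m ^ Suc r)"
      using pow_step_bounds(1)[of "real _" r] by (intro sum_mono) (simp add: add.commute)
    finally show ?thesis using tel by simp
  qed
  have lo: "real n ^ Suc r \<le> real (Suc r) * (P n + real n ^ r)" for n
  proof -
    have "real n ^ Suc r = (\<Sum>m<n. real (Suc m) ^ Suc r - real m ^ Suc r)" using tel by simp
    also have "\<dots> \<le> (\<Sum>m<n. real (Suc r) * real (Suc m) ^ r)"
      using pow_step_bounds(2)[of "real _" r] by (intro sum_mono) (simp add: add.commute)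
    also have "\<dots> = real (Suc r) * (\<Sum>m<n. real (Suc m) ^ r)" by (simp add: sum_distrib_left)
    finally have A: "real n ^ Suc r \<le> real (Suc r) * (\<Sum>m<n. real (Suc m) ^ r)" .
    have "P (Suc n) = 0 ^ r + (\<Sum>m<n. real (Suc m) ^ r)"
      unfolding P_def sum.lessThan_Suc_shift by simp
    moreover have "P (Suc n) = P n + real n ^ r" unfolding P_def by simp
    ultimately have "(\<Sum>m<n. real (Suc m) ^ r) \<le> P n + real n ^ r" by simp
    then show ?thesis using A by (meson mult_left_mono of_nat_0_le_iff order_trans)
  qed
  show ?thesis
  proof (rule tendsto_sandwich[of "\<lambda>n. 1 / real (Suc r) - 1 / real n" _ _ "\<lambda>_. 1 / real (Suc r)"])
    show "\<forall>\<^sub>F n in sequentially. 1 / real (Suc r) - 1 / real n \<le> (\<Sum>m<n. real m ^ r) / real n ^ Suc r"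
      using eventually_gt_at_top[of 0]
    proof eventually_elim
      case (elim n)
      then have np: "real n ^ Suc r > 0" by simp
      have "real n ^ Suc r / real (Suc r) - real n ^ r \<le> P n" using lo[of n]
        by (simp add: field_simps)
      then have "(real n ^ Suc r / real (Suc r) - real n ^ r) / real n ^ Suc r \<le> P n / real n ^ Suc r"
        using np by (intro divide_right_mono) auto
      moreover have "(real n ^ Suc r / real (Suc r) - real n ^ r) / real n ^ Suc r = 1 / real (Suc r) - 1 / real n"
      proof -
        have b: "real n ^ r > 0" using elim by simp
        have "(real n ^ Suc r / real (Suc r) - real n ^ r) / real n ^ Suc r
            = (real n ^ r * (real n / real (Suc r) - 1)) / (real n ^ r * real n)"
          by (simp add: algebra_simps)
        also have "\<dots> = (real n / real (Suc r) - 1) / real n" using b by simp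
        also have "\<dots> = 1 / real (Suc r) - 1 / real n" using elim by (simp add: field_simps)
        finally show ?thesis .
      qed
      ultimately show ?case unfolding P_def by simp
    qed
    show "\<forall>\<^sub>F n in sequentially. (\<Sum>m<n. real m ^ r) / real n ^ Suc r \<le> 1 / real (Suc r)"
      using eventually_gt_at_top[of 0]
    proof eventually_elim
      case (elim n)
      then have np: "real n ^ Suc r > 0" by simp
      show ?case using up[of n] np unfolding P_def by (simp add: field_simps)
    qed
    show "(\<lambda>n. 1 / real (Suc r) - 1 / real n) \<longlonglongrightarrow> 1 / real (Suc r)"
      using tendsto_diff[OF tendsto_const lim_inverse_n'] by simp
  qed simp
qed


lemma abel_id:
  fixes z w :: "nat \<Rightarrow> real"
  shows "(\<Sum>m<n. z m * w m) = (\<Sum>m<n. z m) * w n - (\<Sum>m<n. (\<Sum>k<Suc m. z k) * (w (Suc m) - w m))"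
  by (induction n) (simp_all add: algebra_simps)

lemma aux_div: "k > 0 \<Longrightarrow> norm (x / k - 0) < e \<Longrightarrow> \<bar>x\<bar> \<le> e * (k::real)"
  by (simp add: abs_divide divide_less_eq less_imp_le)

lemma lemZ:
  fixes z :: "nat \<Rightarrow> real"
  assumes Z: "(\<lambda>n. (\<Sum>m<n. z m) / real n) \<longlonglongrightarrow> 0"
  shows "(\<lambda>n. (\<Sum>m<n. z m * real m ^ r) / real n ^ Suc r) \<longlonglongrightarrow> 0"
proof -
  define Zs where "Zs n = (\<Sum>m<n. z m)" for n
  define w where "w m = real m ^ r" for m
  have wmono: "w m \<le> w (Suc m)" for m unfolding w_def by (intro power_mono) auto
  have eq: "(\<Sum>m<n. z m * real m ^ r) / real n ^ Suc r
      = Zs n * w n / real n ^ Suc r - (\<Sum>m<n. Zs (Suc m) * (w (Suc m) - w m)) / real n ^ Suc r" for n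
    using abel_id[of z w n] unfolding Zs_def w_def by (simp add: diff_divide_distrib)
  have t1: "(\<lambda>n. Zs n * w n / real n ^ Suc r) \<longlonglongrightarrow> 0"
  proof -
    have "\<forall>\<^sub>F n in sequentially. Zs n / real n = Zs n * w n / real n ^ Suc r"
      using eventually_gt_at_top[of 0] by eventually_elim (simp add: w_def)
    from tendsto_cong[OF this] Z show ?thesis unfolding Zs_def by simp
  qed
  have t2: "(\<lambda>n. (\<Sum>m<n. Zs (Suc m) * (w (Suc m) - w m)) / real n ^ Suc r) \<longlonglongrightarrow> 0"
  proof (rule lemG[where g = "\<lambda>m. real (Suc m) * (w (Suc m) - w m)" and C = 1])
    fix \<epsilon> :: real assume e: "\<epsilon> > 0"
    obtain N where N: "\<forall>n\<ge>N. norm (Zs n / real n - 0) < \<epsilon>"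
      using LIMSEQ_D[OF Z e] unfolding Zs_def by blast
    show "\<exists>N. \<forall>m\<ge>N. \<bar>Zs (Suc m) * (w (Suc m) - w m)\<bar> \<le> \<epsilon> * (real (Suc m) * (w (Suc m) - w m))"
    proof (intro exI allI impI)
      fix m assume m: "m \<ge> N"
      have "norm (Zs (Suc m) / real (Suc m) - 0) < \<epsilon>" by (rule N[rule_format]) (use m in simp)
      then have H: "\<bar>Zs (Suc m)\<bar> \<le> \<epsilon> * real (Suc m)" by (intro aux_div) auto
      show "\<bar>Zs (Suc m) * (w (Suc m) - w m)\<bar> \<le> \<epsilon> * (real (Suc m) * (w (Suc m) - w m))"
      proof -
        have d: "w (Suc m) - w m \<ge> 0" using wmono[of m] by simp
        have "\<bar>Zs (Suc m) * (w (Suc m) - w m)\<bar> = \<bar>Zs (Suc m)\<bar> * (w (Suc m) - w m)"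
          using d by (simp add: abs_mult)
        also have "\<dots> \<le> \<epsilon> * real (Suc m) * (w (Suc m) - w m)" using mult_right_mono[OF H d] .
        finally show ?thesis by simp
      qed
    qed
  next
    fix m show "0 \<le> real (Suc m) * (w (Suc m) - w m)" using wmono[of m] by simp
  next
    fix n
    have "(\<Sum>m<n. real (Suc m) * (w (Suc m) - w m)) \<le> (\<Sum>m<n. real n * (w (Suc m) - w m))"
      using wmono by (intro sum_mono mult_right_mono) auto
    also have "\<dots> = real n * (w n - w 0)"
      by (simp add: sum_distrib_left[symmetric] sum_lessThan_telescope)
    also have "\<dots> \<le> 1 * real n ^ Suc r" by (simp add: w_def algebra_simps)
    finally show "(\<Sum>m<n. real (Suc m) * (w (Suc m) - w m)) \<le> 1 * real n ^ Suc r" .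
  qed simp
  show ?thesis unfolding eq using tendsto_diff[OF t1 t2] by simp
qed

lemma lemR:
  fixes y :: "nat \<Rightarrow> real"
  assumes Y: "(\<lambda>n. (\<Sum>m<n. y m) / real n) \<longlonglongrightarrow> p"
  shows "(\<lambda>n. (\<Sum>m<n. y m * real m ^ r) / real n ^ Suc r) \<longlonglongrightarrow> p / real (Suc r)"
proof -
  define z where "z m = y m - p" for m
  have Z: "(\<lambda>n. (\<Sum>m<n. z m) / real n) \<longlonglongrightarrow> 0"
  proof -
    have "\<forall>\<^sub>F n in sequentially. (\<Sum>m<n. y m) / real n - p = (\<Sum>m<n. z m) / real n"
      using eventually_gt_at_top[of 0] by eventually_elim (simp add: z_def sum_subtractf field_simps)
    from tendsto_cong[OF this] tendsto_diff[OF Y tendsto_const[of p]] show ?thesis by simp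
  qed
  have eq: "(\<Sum>m<n. y m * real m ^ r) / real n ^ Suc r
     = p * ((\<Sum>m<n. real m ^ r) / real n ^ Suc r) + (\<Sum>m<n. z m * real m ^ r) / real n ^ Suc r" for n
    by (simp add: z_def algebra_simps sum.distrib sum_distrib_left add_divide_distrib sum_subtractf diff_divide_distrib)
  show ?thesis unfolding eq
    using tendsto_add[OF tendsto_mult[OF tendsto_const[of p] pow_sum_limit[of r]] lemZ[OF Z, of r]]
    by simp
qed

lemma lemA:
  fixes y a :: "nat \<Rightarrow> real"
  assumes A: "(\<lambda>n. a n / real n ^ r) \<longlonglongrightarrow> c"
    and Y: "(\<lambda>n. (\<Sum>m<n. y m) / real n) \<longlonglongrightarrow> p"
    and B: "\<And>n. (\<Sum>m<n. \<bar>y m\<bar>) \<le> B * real n"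
  shows "(\<lambda>n. (\<Sum>m<n. y m * a m) / real n ^ Suc r) \<longlonglongrightarrow> c * p / real (Suc r)"
proof -
  define e where "e m = a m - c * real m ^ r" for m
  have eq: "(\<Sum>m<n. y m * a m) / real n ^ Suc r
     = c * ((\<Sum>m<n. y m * real m ^ r) / real n ^ Suc r) + (\<Sum>m<n. y m * e m) / real n ^ Suc r" for n
  proof -
    have "(\<Sum>m<n. y m * a m) = c * (\<Sum>m<n. y m * real m ^ r) + (\<Sum>m<n. y m * e m)"
      by (simp add: e_def algebra_simps sum_subtractf sum_distrib_left)
    then show ?thesis by (simp add: add_divide_distrib)
  qed
  have t2: "(\<lambda>n. (\<Sum>m<n. y m * e m) / real n ^ Suc r) \<longlonglongrightarrow> 0"
  proof (rule lemG[where g = "\<lambda>m. \<bar>y m\<bar> * real m ^ r" and C = B])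
    fix \<epsilon> :: real assume eps: "\<epsilon> > 0"
    obtain N where N: "\<forall>n\<ge>N. norm (a n / real n ^ r - c) < \<epsilon>"
      using LIMSEQ_D[OF A eps] by blast
    show "\<exists>N. \<forall>m\<ge>N. \<bar>y m * e m\<bar> \<le> \<epsilon> * (\<bar>y m\<bar> * real m ^ r)"
    proof (intro exI allI impI)
      fix m assume m: "m \<ge> max N 1"
      then have mp: "real m ^ r > 0" by simp
      have "\<bar>a m / real m ^ r - c\<bar> < \<epsilon>" using N m by auto
      moreover have "a m / real m ^ r - c = e m / real m ^ r" using mp by (simp add: e_def field_simps)
      ultimately have H: "\<bar>e m\<bar> \<le> \<epsilon> * real m ^ r" using mp by (simp add: abs_divide field_simps)
      show "\<bar>y m * e m\<bar> \<le> \<epsilon> * (\<bar>y m\<bar> * real m ^ r)"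
        using mult_right_mono[OF H, of "\<bar>y m\<bar>"] by (simp add: abs_mult algebra_simps)
    qed
  next
    fix n
    have "(\<Sum>m<n. \<bar>y m\<bar> * real m ^ r) \<le> (\<Sum>m<n. \<bar>y m\<bar> * real n ^ r)"
      by (intro sum_mono mult_left_mono power_mono) auto
    also have "\<dots> = (\<Sum>m<n. \<bar>y m\<bar>) * real n ^ r" by (simp add: sum_distrib_right)
    also have "\<dots> \<le> B * real n * real n ^ r" using B[of n] by (simp add: mult_right_mono)
    finally show "(\<Sum>m<n. \<bar>y m\<bar> * real m ^ r) \<le> B * real n ^ Suc r" by (simp add: algebra_simps)
  qed auto
  show ?thesis unfolding eq
    using tendsto_add[OF tendsto_mult[OF tendsto_const[of c] lemR[OF Y, of r]] t2]
    by simp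
qed


lemma incr_tuples_finite: "finite (incr_tuples \<nu> n)"
proof -
  have "incr_tuples \<nu> n \<subseteq> {f. \<forall>x. (x \<in> {..<\<nu>} \<longrightarrow> f x \<in> {..<n}) \<and> (x \<notin> {..<\<nu>} \<longrightarrow> f x = 0)}"
    unfolding incr_tuples_def by auto
  then show ?thesis by (rule finite_subset) (intro finite_set_of_finite_funs; simp)
qed

lemma incr_tuples_0: "incr_tuples 0 n = {\<lambda>_. 0}"
  unfolding incr_tuples_def by auto

lemma incr_tuples_mono:
  assumes "ks \<in> incr_tuples k n" "i < j" "j < k"
  shows "ks i < ks j"
  using assms(2,3)
proof (induction j)
  case 0 then show ?case by simp
next
  case (Suc j)
  have st: "ks j < ks (Suc j)" using assms(1) Suc.prems unfolding incr_tuples_def by auto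
  show ?case
  proof (cases "i = j")
    case True then show ?thesis using st by simp
  next
    case False then have "i < j" using Suc.prems by simp
    then show ?thesis using Suc.IH Suc.prems st by simp
  qed
qed

lemma incr_rec:
  fixes F :: "nat \<Rightarrow> nat \<Rightarrow> real"
  shows "(\<Sum>ks\<in>incr_tuples (Suc \<nu>) n. \<Prod>j<Suc \<nu>. F j (ks j))
       = (\<Sum>m<n. F \<nu> m * (\<Sum>ks\<in>incr_tuples \<nu> m. \<Prod>j<\<nu>. F j (ks j)))"
proof -
  have "(\<Sum>m<n. F \<nu> m * (\<Sum>ks\<in>incr_tuples \<nu> m. \<Prod>j<\<nu>. F j (ks j)))
      = (\<Sum>m<n. \<Sum>ks\<in>incr_tuples \<nu> m. F \<nu> m * (\<Prod>j<\<nu>. F j (ks j)))"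
    by (simp add: sum_distrib_left)
  also have "\<dots> = (\<Sum>(m, ks)\<in>Sigma {..<n} (\<lambda>m. incr_tuples \<nu> m). F \<nu> m * (\<Prod>j<\<nu>. F j (ks j)))"
    by (rule sum.Sigma) (auto simp: incr_tuples_finite)
  also have "\<dots> = (\<Sum>ks\<in>incr_tuples (Suc \<nu>) n. \<Prod>j<Suc \<nu>. F j (ks j))"
  proof (rule sum.reindex_bij_witness[where i = "\<lambda>ks. (ks \<nu>, ks(\<nu> := 0))" and j = "\<lambda>(m, ks). ks(\<nu> := m)"])
    fix a assume a: "a \<in> Sigma {..<n} (\<lambda>m. incr_tuples \<nu> m)"
    then obtain m ks where [simp]: "a = (m, ks)" and m: "m < n" and ks: "ks \<in> incr_tuples \<nu> m" by auto
    have ks0: "ks \<nu> = 0" using ks unfolding incr_tuples_def by auto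
    show "((case a of (m, ks) \<Rightarrow> ks(\<nu> := m)) \<nu>, (case a of (m, ks) \<Rightarrow> ks(\<nu> := m))(\<nu> := 0)) = a"
      using ks0 by auto
    show "(case a of (m, ks) \<Rightarrow> ks(\<nu> := m)) \<in> incr_tuples (Suc \<nu>) n"
      using ks m unfolding incr_tuples_def
      by (auto simp: less_Suc_eq)
    have "(\<Prod>j<Suc \<nu>. F j ((ks(\<nu> := m)) j)) = F \<nu> m * (\<Prod>j<\<nu>. F j (ks j))"
      by (simp add: prod.lessThan_Suc mult.commute)
    then show "(\<Prod>j<Suc \<nu>. F j ((case a of (m, ks) \<Rightarrow> ks(\<nu> := m)) j)) =
         (case a of (m, ks) \<Rightarrow> F \<nu> m * (\<Prod>j<\<nu>. F j (ks j)))" by simp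
  next
    fix b assume b: "b \<in> incr_tuples (Suc \<nu>) n"
    show "(case (b \<nu>, b(\<nu> := 0)) of (m, ks) \<Rightarrow> ks(\<nu> := m)) = b" by simp
    have bn: "b \<nu> < n" using b unfolding incr_tuples_def by auto
    have lt: "b j < b \<nu>" if "j < \<nu>" for j using incr_tuples_mono[OF b that] by simp
    have "b(\<nu> := 0) \<in> incr_tuples \<nu> (b \<nu>)"
      using b lt unfolding incr_tuples_def by auto
    then show "(b \<nu>, b(\<nu> := 0)) \<in> Sigma {..<n} (\<lambda>m. incr_tuples \<nu> m)" using bn by simp
  qed
  finally show ?thesis by simp
qed


lemma cesaro_comp:
  fixes x :: "nat \<Rightarrow> real ^ 'd"
  assumes H: "(\<lambda>n. (1 / real n) *\<^sub>R (\<Sum>k\<le>n. x k)) \<longlonglongrightarrow> q"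
  shows "(\<lambda>n. (\<Sum>m<n. x m $ i) / real n) \<longlonglongrightarrow> q $ i"
proof (rule LIMSEQ_imp_Suc)
  define A where "A n = (1 / real n) * (\<Sum>k\<le>n. x k $ i)" for n
  have A: "A \<longlonglongrightarrow> q $ i" using tendsto_vec_nth[OF H, of i] unfolding A_def by simp
  have "(\<lambda>n. A n * (real n / real (Suc n))) \<longlonglongrightarrow> q $ i * 1"
    by (intro tendsto_mult A LIMSEQ_n_over_Suc_n)
  then have L: "(\<lambda>n. A n * (real n / real (Suc n))) \<longlonglongrightarrow> q $ i" by simp
  have E: "\<forall>\<^sub>F n in sequentially. A n * (real n / real (Suc n)) = (\<Sum>m<Suc n. x m $ i) / real (Suc n)"
    using eventually_gt_at_top[of 0]
    by eventually_elim (simp add: A_def lessThan_Suc_atMost del: of_nat_Suc)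
  show "(\<lambda>n. (\<Sum>m<Suc n. x m $ i) / real (Suc n)) \<longlonglongrightarrow> q $ i"
    using tendsto_cong[OF E] L by auto
qed

lemma det_main:
  fixes x :: "nat \<Rightarrow> real ^ 'd"
  assumes H: "(\<lambda>n. (1 / real n) *\<^sub>R (\<Sum>k\<le>n. x k)) \<longlonglongrightarrow> q"
    and B: "\<And>n. (\<Sum>k<n. norm (x k)) \<le> B * real n"
  shows "(\<lambda>n. (\<Sum>ks\<in>incr_tuples \<nu> n. \<Prod>j<\<nu>. x (ks j) $ is j) / real n ^ \<nu>)
           \<longlonglongrightarrow> (1 / fact \<nu>) * (\<Prod>j<\<nu>. q $ is j)"
proof (induction \<nu>)
  case 0
  then show ?case by (simp add: incr_tuples_0)
next
  case (Suc \<nu>)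
  have Bi: "(\<Sum>m<n. \<bar>x m $ is \<nu>\<bar>) \<le> B * real n" for n
    using B[of n] sum_mono[of "{..<n}" "\<lambda>m. \<bar>x m $ is \<nu>\<bar>" "\<lambda>m. norm (x m)"]
      component_le_norm_cart by (meson order_trans)
  have "(\<lambda>n. (\<Sum>m<n. x m $ is \<nu> * (\<Sum>ks\<in>incr_tuples \<nu> m. \<Prod>j<\<nu>. x (ks j) $ is j)) / real n ^ Suc \<nu>)
     \<longlonglongrightarrow> (1 / fact \<nu>) * (\<Prod>j<\<nu>. q $ is j) * q $ is \<nu> / real (Suc \<nu>)"
    by (rule lemA[OF Suc.IH cesaro_comp[OF H] Bi])
  moreover have "(1 / fact \<nu>) * (\<Prod>j<\<nu>. q $ is j) * q $ is \<nu> / real (Suc \<nu>)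
      = (1 / fact (Suc \<nu>)) * (\<Prod>j<Suc \<nu>. q $ is j)"
    by (simp add: field_simps)
  ultimately show ?case
    using incr_rec[of "\<lambda>j k. x k $ is j" \<nu>] by (simp add: ac_simps)
qed


primrec Gm :: "real \<Rightarrow> nat \<Rightarrow> (nat \<Rightarrow> real ^ 'd) \<Rightarrow> real" where
  "Gm l 0 f = 0"
| "Gm l (Suc n) f = max (Gm l n f) (\<Sum>j<Suc n. norm (f j) - l)"

lemma Gm_nonneg: "Gm l n f \<ge> 0"
  by (induction n) auto

lemma Gm_mono_n: "Gm l n f \<le> Gm l (Suc n) f"
  by simp

lemma Gm_upper:
  assumes "l \<ge> 0" shows "Gm l n f \<le> (\<Sum>j<n. norm (f j))"
proof (induction n)
  case 0 then show ?case by simp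
next
  case (Suc n)
  have "(\<Sum>j<Suc n. norm (f j) - l) \<le> (\<Sum>j<Suc n. norm (f j))"
    using assms by (intro sum_mono) auto
  moreover have "(\<Sum>j<n. norm (f j)) \<le> (\<Sum>j<Suc n. norm (f j))" by simp
  then have "Gm l n f \<le> (\<Sum>j<Suc n. norm (f j))" using Suc.IH by linarith
  ultimately show ?case by (simp only: Gm.simps max.bounded_iff)
qed

lemma Gm_lower: "k \<le> n \<Longrightarrow> (\<Sum>j<k. norm (f j) - l) \<le> Gm l n f"
proof (induction n)
  case 0 then show ?case by simp
next
  case (Suc n)
  show ?case
  proof (cases "k = Suc n")
    case True then show ?thesis by simp
  next
    case False then have "k \<le> n" using Suc.prems by simp
    then show ?thesis using Suc.IH by (simp add: le_max_iff_disj)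
  qed
qed

lemma Gm_attained: "Gm l n f = 0 \<or> (\<exists>k. 1 \<le> k \<and> k \<le> n \<and> Gm l n f = (\<Sum>j<k. norm (f j) - l))"
proof (induction n)
  case 0 then show ?case by simp
next
  case (Suc n)
  show ?case
  proof (cases "Gm l n f \<le> (\<Sum>j<Suc n. norm (f j) - l)")
    case True
    then have "Gm l (Suc n) f = (\<Sum>j<Suc n. norm (f j) - l)" by (simp only: Gm.simps max_def) simp
    then show ?thesis by (intro disjI2 exI[of _ "Suc n"]) simp
  next
    case False
    then have "Gm l (Suc n) f = Gm l n f" by (simp only: Gm.simps max_def) simp
    then show ?thesis using Suc.IH le_SucI by metis
  qed
qed

lemma Gm_key:
  "Gm l n f - Gm l n (\<lambda>j. f (Suc j)) \<le> (if Gm l n f > 0 then norm (f 0) - l else 0)"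
proof (cases "Gm l n f > 0")
  case True
  then obtain k where k: "1 \<le> k" "k \<le> n" and eq: "Gm l n f = (\<Sum>j<k. norm (f j) - l)"
    using Gm_attained[of l n f] by auto
  obtain k' where k': "k = Suc k'" using k(1) by (cases k) auto
  have "Gm l n f = (norm (f 0) - l) + (\<Sum>j<k'. norm (f (Suc j)) - l)"
    unfolding eq k' sum.lessThan_Suc_shift by simp
  also have "(\<Sum>j<k'. norm (f (Suc j)) - l) \<le> Gm l n (\<lambda>j. f (Suc j))"
    using Gm_lower[of k' n "\<lambda>j. f (Suc j)" l] k k' by simp
  finally show ?thesis using True by simp
next
  case False
  then show ?thesis using Gm_nonneg[of l n f] Gm_nonneg[of l n "\<lambda>j. f (Suc j)"] by simp
qed

lemma Gm_measurable[measurable]: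
  "(\<lambda>f. Gm l n f) \<in> borel_measurable (PiM UNIV (\<lambda>_. (borel :: (real ^ 'd) measure)))"
  by (induction n) simp_all


lemma maximal_bound:
  fixes M :: "'a measure" and \<xi> :: "nat \<Rightarrow> 'a \<Rightarrow> real ^ 'd"
  assumes P: "prob_space M"
    and meas: "\<And>k. \<xi> k \<in> borel_measurable M"
    and stationary: "\<And>k. distr M (PiM UNIV (\<lambda>_. borel)) (\<lambda>\<omega> n. \<xi> (n + k) \<omega>)
                         = distr M (PiM UNIV (\<lambda>_. borel)) (\<lambda>\<omega> n. \<xi> n \<omega>)"
    and int0: "integrable M (\<xi> 0)"
  shows "AE \<omega> in M. \<exists>B. \<forall>n. (\<Sum>k<n. norm (\<xi> k \<omega>)) \<le> B * real n"
proof -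
  interpret prob_space M by (rule P)
  let ?PI = "PiM UNIV (\<lambda>_. (borel :: (real ^ 'd) measure))"
  have shm: "(\<lambda>\<omega> n. \<xi> (n + k) \<omega>) \<in> M \<rightarrow>\<^sub>M ?PI" for k
    by (rule measurable_PiM_single'[where f = "\<lambda>i. \<xi> (i + k)"]) (auto simp: meas)
  have sh0: "(\<lambda>\<omega> n. \<xi> n \<omega>) \<in> M \<rightarrow>\<^sub>M ?PI"
    by (rule measurable_PiM_single'[where f = "\<lambda>i. \<xi> i"]) (auto simp: meas)
  have stat_int: "(\<integral>\<omega>. g (\<lambda>n. \<xi> (n + k) \<omega>) \<partial>M) = (\<integral>\<omega>. g (\<lambda>n. \<xi> n \<omega>) \<partial>M)"
    if g: "g \<in> borel_measurable ?PI" for g :: "_ \<Rightarrow> real" and k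
  proof -
    have "(\<integral>\<omega>. g (\<lambda>n. \<xi> (n + k) \<omega>) \<partial>M) = integral\<^sup>L (distr M ?PI (\<lambda>\<omega> n. \<xi> (n + k) \<omega>)) g"
      by (rule integral_distr[OF shm g, symmetric])
    also have "\<dots> = integral\<^sup>L (distr M ?PI (\<lambda>\<omega> n. \<xi> n \<omega>)) g" by (simp only: stationary)
    also have "\<dots> = (\<integral>\<omega>. g (\<lambda>n. \<xi> n \<omega>) \<partial>M)" by (rule integral_distr[OF sh0 g])
    finally show ?thesis .
  qed
  have stat_intble: "integrable M (\<lambda>\<omega>. g (\<lambda>n. \<xi> (n + k) \<omega>)) \<longleftrightarrow> integrable M (\<lambda>\<omega>. g (\<lambda>n. \<xi> n \<omega>))"
    if g: "g \<in> borel_measurable ?PI" for g :: "_ \<Rightarrow> real" and k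
  proof -
    have "integrable M (\<lambda>\<omega>. g (\<lambda>n. \<xi> (n + k) \<omega>)) \<longleftrightarrow> integrable (distr M ?PI (\<lambda>\<omega> n. \<xi> (n + k) \<omega>)) g"
      by (rule integrable_distr_eq[OF shm g, symmetric])
    also have "\<dots> \<longleftrightarrow> integrable (distr M ?PI (\<lambda>\<omega> n. \<xi> n \<omega>)) g" by (simp only: stationary)
    also have "\<dots> \<longleftrightarrow> integrable M (\<lambda>\<omega>. g (\<lambda>n. \<xi> n \<omega>))" by (rule integrable_distr_eq[OF sh0 g])
    finally show ?thesis .
  qed
  have n0m: "(\<lambda>f. norm (f (0::nat))) \<in> borel_measurable ?PI" by measurable
  have Yint: "integrable M (\<lambda>\<omega>. norm (\<xi> k \<omega>))" for k
    using stat_intble[OF n0m, of k] int0 by simp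
  define E0 where "E0 = (\<integral>\<omega>. norm (\<xi> 0 \<omega>) \<partial>M)"
  define S where "S l n = {\<omega>\<in>space M. Gm l n (\<lambda>j. \<xi> j \<omega>) > 0}" for l n
  have Gmeas: "(\<lambda>\<omega>. Gm l n (\<lambda>j. \<xi> (j + k) \<omega>)) \<in> borel_measurable M" for l n k
    by (rule measurable_compose[OF shm Gm_measurable])
  have Gmeas0: "(\<lambda>\<omega>. Gm l n (\<lambda>j. \<xi> j \<omega>)) \<in> borel_measurable M" for l n
    by (rule measurable_compose[OF sh0 Gm_measurable])
  have Ssets: "S l n \<in> sets M" for l n
    unfolding S_def using Gmeas0 by measurable
  have Gint: "integrable M (\<lambda>\<omega>. Gm l n (\<lambda>j. \<xi> (j + k) \<omega>))" if l: "l \<ge> 0" for l n k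
  proof (rule Bochner_Integration.integrable_bound[OF Bochner_Integration.integrable_sum[where I="{..<n}" and f="\<lambda>j \<omega>. norm (\<xi> (j + k) \<omega>)"]])
    show "\<And>j. j \<in> {..<n} \<Longrightarrow> integrable M (\<lambda>\<omega>. norm (\<xi> (j + k) \<omega>))" by (rule Yint)
    show "(\<lambda>\<omega>. Gm l n (\<lambda>j. \<xi> (j + k) \<omega>)) \<in> borel_measurable M" by (rule Gmeas)
    show "AE \<omega> in M. norm (Gm l n (\<lambda>j. \<xi> (j + k) \<omega>)) \<le> norm (\<Sum>j<n. norm (\<xi> (j + k) \<omega>))"
    proof (rule AE_I2)
      fix \<omega>
      have "\<bar>Gm l n (\<lambda>j. \<xi> (j + k) \<omega>)\<bar> = Gm l n (\<lambda>j. \<xi> (j + k) \<omega>)" using Gm_nonneg by (rule abs_of_nonneg)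
      also have "\<dots> \<le> (\<Sum>j<n. norm (\<xi> (j + k) \<omega>))" by (rule Gm_upper[OF l])
      also have "\<dots> = norm (\<Sum>j<n. norm (\<xi> (j + k) \<omega>))" by (simp add: sum_nonneg)
      finally show "norm (Gm l n (\<lambda>j. \<xi> (j + k) \<omega>)) \<le> norm (\<Sum>j<n. norm (\<xi> (j + k) \<omega>))" by simp
    qed
  qed
  have claim1: "l * measure M (S l n) \<le> E0" if l: "l > 0" for l n
  proof -
    let ?G = "\<lambda>\<omega>. Gm l n (\<lambda>j. \<xi> (j + 0) \<omega>)"
    let ?G' = "\<lambda>\<omega>. Gm l n (\<lambda>j. \<xi> (j + 1) \<omega>)"
    have iG: "integrable M ?G" using Gint[of l n 0] l by simp
    have iG': "integrable M ?G'" using Gint[of l n 1] l by simp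
    have eqi: "integral\<^sup>L M ?G' = integral\<^sup>L M ?G"
      using stat_int[OF Gm_measurable, of l n 1] stat_int[OF Gm_measurable, of l n 0] by simp
    have iI: "integrable M (\<lambda>\<omega>. norm (\<xi> 0 \<omega>) * indicator (S l n) \<omega>)"
      by (rule integrable_real_mult_indicator[OF Ssets Yint])
    have iI2: "integrable M (\<lambda>\<omega>. l * indicator (S l n) \<omega>)"
      using Ssets by (intro integrable_mult_right) (simp add: integrable_indicator_iff emeasure_eq_measure)
    have pw: "?G \<omega> - ?G' \<omega> \<le> norm (\<xi> 0 \<omega>) * indicator (S l n) \<omega> - l * indicator (S l n) \<omega>"
      if "\<omega> \<in> space M" for \<omega>
      using Gm_key[of l n "\<lambda>j. \<xi> j \<omega>"] that by (auto simp: S_def indicator_def)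
    have "0 = integral\<^sup>L M (\<lambda>\<omega>. ?G \<omega> - ?G' \<omega>)" using eqi iG iG' by simp
    also have "\<dots> \<le> integral\<^sup>L M (\<lambda>\<omega>. norm (\<xi> 0 \<omega>) * indicator (S l n) \<omega> - l * indicator (S l n) \<omega>)"
      by (rule Bochner_Integration.integral_mono) (use iG iG' iI iI2 pw in auto)
    also have "\<dots> = integral\<^sup>L M (\<lambda>\<omega>. norm (\<xi> 0 \<omega>) * indicator (S l n) \<omega>) - l * measure M (S l n)"
      using iI iI2 Ssets by (simp add: Int_absorb2 sets.sets_into_space)
    also have "integral\<^sup>L M (\<lambda>\<omega>. norm (\<xi> 0 \<omega>) * indicator (S l n) \<omega>) \<le> E0"
      unfolding E0_def by (rule Bochner_Integration.integral_mono) (use iI Yint in \<open>auto simp: indicator_def\<close>)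
    finally show ?thesis by simp
  qed
  have claim2: "measure M (\<Union>n. S l n) \<le> E0 / l" if l: "l > 0" for l
  proof -
    have inc: "incseq (S l)"
      by (rule incseq_SucI) (auto simp: S_def intro: less_le_trans[OF _ Gm_mono_n])
    have "(\<lambda>n. measure M (S l n)) \<longlonglongrightarrow> measure M (\<Union>n. S l n)"
      by (rule finite_Lim_measure_incseq) (use Ssets inc in auto)
    moreover have "measure M (S l n) \<le> E0 / l" for n
      using claim1[OF l, of n] l by (simp add: field_simps)
    ultimately show ?thesis by (intro LIMSEQ_le_const2) auto
  qed
  define N where "N = (\<Inter>m. \<Union>n. S (real (Suc m)) n)"
  have Nsets: "N \<in> sets M" unfolding N_def using Ssets by auto
  have "measure M N \<le> E0 / real (Suc m)" for m
  proof -
    have "measure M N \<le> measure M (\<Union>n. S (real (Suc m)) n)"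
      by (rule finite_measure_mono) (use Ssets in \<open>auto simp: N_def\<close>)
    also have "\<dots> \<le> E0 / real (Suc m)" by (rule claim2) simp
    finally show ?thesis .
  qed
  moreover have "(\<lambda>m. E0 / real (Suc m)) \<longlonglongrightarrow> 0"
    using tendsto_mult[OF tendsto_const[of E0] LIMSEQ_inverse_real_of_nat] by (simp add: divide_inverse)
  ultimately have "measure M N \<le> 0" by (intro LIMSEQ_le_const) auto
  then have "measure M N = 0" by (simp add: measure_nonneg antisym)
  then have Nnull: "N \<in> null_sets M" using Nsets by (simp add: emeasure_eq_measure null_sets_def)
  show ?thesis
  proof (rule AE_I'[OF Nnull], safe)
    fix \<omega> assume \<omega>: "\<omega> \<in> space M" and nB: "\<nexists>B. \<forall>n. (\<Sum>k<n. norm (\<xi> k \<omega>)) \<le> B * real n"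
    show "\<omega> \<in> N" unfolding N_def
    proof (intro InterI, safe)
      fix m
      obtain n where n: "(\<Sum>k<n. norm (\<xi> k \<omega>)) > real (Suc m) * real n" using nB by (meson not_le)
      have "(\<Sum>j<n. norm (\<xi> j \<omega>) - real (Suc m)) > 0"
        using n by (simp add: sum_subtractf algebra_simps)
      also have "(\<Sum>j<n. norm (\<xi> j \<omega>) - real (Suc m)) \<le> Gm (real (Suc m)) n (\<lambda>j. \<xi> j \<omega>)"
        by (rule Gm_lower) simp
      finally show "\<omega> \<in> (\<Union>n. S (real (Suc m)) n)" using \<omega> by (auto simp: S_def)
    qed
  qed
qed

theorem corollary2p2:
  fixes M :: "'a measure" and \<xi> :: "nat \<Rightarrow> 'a \<Rightarrow> real ^ 'd" and Q :: "'a \<Rightarrow> real ^ 'd"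
  assumes "prob_space M"
    and meas: "\<And>k. \<xi> k \<in> borel_measurable M"
    and stationary: "\<And>k. distr M (PiM UNIV (\<lambda>_. borel)) (\<lambda>\<omega> n. \<xi> (n + k) \<omega>)
                         = distr M (PiM UNIV (\<lambda>_. borel)) (\<lambda>\<omega> n. \<xi> n \<omega>)"
    and "integrable M (\<xi> 0)"
    and Q: "AE \<omega> in M. (\<lambda>n. (1 / real n) *\<^sub>R (\<Sum>k\<le>n. \<xi> k \<omega>)) \<longlonglongrightarrow> Q \<omega>"
  shows "AE \<omega> in M. \<forall>\<nu>\<ge>1. \<forall>is :: nat \<Rightarrow> 'd.
           (\<lambda>n. iter_sum \<xi> is \<nu> n \<omega> / real n ^ \<nu>)
             \<longlonglongrightarrow> (1 / fact \<nu>) * (\<Prod>j<\<nu>. Q \<omega> $ is j)"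
proof -
  have AB: "AE \<omega> in M. \<exists>B. \<forall>n. (\<Sum>k<n. norm (\<xi> k \<omega>)) \<le> B * real n"
    by (rule maximal_bound[OF assms(1) meas stationary assms(4)])
  from AB Q show ?thesis
  proof eventually_elim
    case (elim \<omega>)
    then obtain B where B: "\<And>n. (\<Sum>k<n. norm (\<xi> k \<omega>)) \<le> B * real n" by blast
    show ?case
      unfolding iter_sum_def
      using det_main[of "\<lambda>k. \<xi> k \<omega>" "Q \<omega>" B] elim B by blast
  qed
qed

end
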